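(* Let $n=2^m m'$, where $m\in\mathbb{N}=\{0,1,2,\dots\}$ and $m'$ is a positive odd integer, and let $m'=p_1^{\alpha_1}p_2^{\alpha_2}\cdots p_k^{\alpha_k}$ be the prime factorization of $m'$. Then the subgroup commutativity degree of the dicyclic group $Dic_{4n}$ is $$sd(Dic_{4n})=\frac{(m+2)^2\tau(m')^2+2(m+2)\tau(m')\sigma(n)+[(m-1)2^{m+3}+9]\,g(m')}{[(m+2)\tau(m')+\sigma(n)]^2},$$ where $$g(m')=\prod_{i=1}^k\frac{(2\alpha_i+1)p_i^{\alpha_i+2}-(2\alpha_i+3)p_i^{\alpha_i+1}+p_i+1}{(p_i-1)^2}$$ (an empty product, i.e. $m'=1$, being equal to $1$).
   Context: For a finite group $G$, $L(G)$ denotes the set of all subgroups of $G$, and the subgroup commutativity degree is $sd(G)=\frac{1}{|L(G)|^2}\,\bigl|\{(H,K)\in L(G)^2 : HK=KH\}\bigr|$. For a positive integer $n$, $\tau(n)$ is the number of positive divisors of $n$ and $\sigma(n)$ is their sum. The dicyclic group of order $4n$ ($n\geq 1$) is $Dic_{4n}=\langle a,\gamma \mid a^{2n}=e,\ \gamma^2=a^n,\ \gamma^{-1}a\gamma=a^{-1}\rangle$. *)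

theory Defs
  imports "HOL-Algebra.Algebra" "HOL-Computational_Algebra.Primes" Complex_Main
begin

text \<open>Dicyclic group of order 4n, concretely: the pair (i, b) stands for a^i gamma^b
  with 0 <= i < 2n.  Multiplication uses gamma a^j = a^(-j) gamma and gamma^2 = a^n.\<close>
definition Dic :: "nat \<Rightarrow> (nat \<times> bool) monoid" where
  "Dic n = \<lparr> carrier = {0..<2*n} \<times> UNIV,
             monoid.mult = (\<lambda>(i,b) (j,c). ((i + (if b then 2*n - j else j) + (if b \<and> c then n else 0)) mod (2*n),
                                    b \<noteq> c)),
             one = (0, False) \<rparr>"

definition subgroups :: "('a, 'b) monoid_scheme \<Rightarrow> 'a set set" where
  "subgroups G = {H. subgroup H G}"

definition sd :: "('a, 'b) monoid_scheme \<Rightarrow> real" where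
  "sd G = real (card {(H, K). H \<in> subgroups G \<and> K \<in> subgroups G \<and> H <#>\<^bsub>G\<^esub> K = K <#>\<^bsub>G\<^esub> H})
          / real (card (subgroups G))^2"

definition tau :: "nat \<Rightarrow> nat" where
  "tau n = card {d. d dvd n}"

definition sigma :: "nat \<Rightarrow> nat" where
  "sigma n = (\<Sum>d\<in>{d. d dvd n}. d)"

definition gfun :: "nat \<Rightarrow> real" where
  "gfun m' = (\<Prod>p\<in>prime_factors m'.
      let a = multiplicity p m'; q = real p in
      ((2 * real a + 1) * q ^ (a+2) - (2 * real a + 3) * q ^ (a+1) + q + 1) / (q - 1)^2)"

end

theory Submission
  imports Defs
begin


lemma modA: "((a::int) - b mod m + c) mod m = (a - b + c) mod m"
  by (metis add.commute add_diff_eq mod_diff_right_eq diff_add_eq)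
lemma modB: "((a::int) + b mod m + c) mod m = (a + b + c) mod m"
  by (metis add.assoc add.commute mod_add_left_eq)
lemma modC: "((a::int) mod m + b + c) mod m = (a + b + c) mod m"
  by (metis add.assoc mod_add_left_eq)
lemma modD: "((a::int) mod m - b + c) mod m = (a - b + c) mod m"
  by (metis mod_add_left_eq mod_diff_left_eq)

lemma Dic_carrier: "carrier (Dic n) = {0..<2*n} \<times> UNIV" by (simp add: Dic_def)
lemma Dic_one: "\<one>\<^bsub>Dic n\<^esub> = (0, False)" by (simp add: Dic_def)

lemma Dic_mult_fst:
  assumes "j < 2*n"
  shows "int (fst ((i,b) \<otimes>\<^bsub>Dic n\<^esub> (j,c))) =
     (int i + (if b then - int j else int j) + (if b \<and> c then int n else 0)) mod (2 * int n)"
proof -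
  have "int ((i + (if b then 2*n - j else j) + (if b \<and> c then n else 0)) mod (2*n))
      = int (i + (if b then 2*n - j else j) + (if b \<and> c then n else 0)) mod (2 * int n)"
    by (simp add: zmod_int)
  also have "int (i + (if b then 2*n - j else j) + (if b \<and> c then n else 0))
     = (int i + (if b then - int j else int j) + (if b \<and> c then int n else 0)) + (if b then 2 * int n else 0)"
    using assms by (auto simp: of_nat_diff)
  also have "\<dots> mod (2 * int n) = (int i + (if b then - int j else int j) + (if b \<and> c then int n else 0)) mod (2 * int n)"
    by (auto simp: mod_eq_dvd_iff algebra_simps)
  finally show ?thesis by (simp add: Dic_def)
qed

lemma Dic_mult_snd: "snd ((i,b) \<otimes>\<^bsub>Dic n\<^esub> (j,c)) = (b \<noteq> c)"
  by (simp add: Dic_def)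

lemma Dic_mult_lt: "0 < n \<Longrightarrow> fst ((i,b) \<otimes>\<^bsub>Dic n\<^esub> (j,c)) < 2*n"
  by (simp add: Dic_def)

lemma pair_eqI_int: "int (fst x) = int (fst y) \<Longrightarrow> snd x = snd y \<Longrightarrow> x = y"
  by (simp add: prod_eq_iff)

lemma Dic_assoc:
  assumes "0 < n" and xyz: "i < 2*n" "j < 2*n" "k < 2*n"
  shows "((i,b) \<otimes>\<^bsub>Dic n\<^esub> (j,c)) \<otimes>\<^bsub>Dic n\<^esub> (k,e) = (i,b) \<otimes>\<^bsub>Dic n\<^esub> ((j,c) \<otimes>\<^bsub>Dic n\<^esub> (k,e))"
proof -
  obtain j' c' where yz: "(j,c) \<otimes>\<^bsub>Dic n\<^esub> (k,e) = (j',c')" by fastforce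
  obtain i' b' where xy: "(i,b) \<otimes>\<^bsub>Dic n\<^esub> (j,c) = (i',b')" by fastforce
  have j': "j' < 2*n" using yz assms Dic_mult_lt by (metis fst_conv)
  have ij: "int i' = (int i + (if b then - int j else int j) + (if b \<and> c then int n else 0)) mod (2 * int n)"
    "b' = (b \<noteq> c)" using Dic_mult_fst[OF xyz(2), of i b c] xy apply simp
    using xy by (metis Dic_mult_snd snd_conv)
  have jk: "int j' = (int j + (if c then - int k else int k) + (if c \<and> e then int n else 0)) mod (2 * int n)"
    "c' = (c \<noteq> e)" using Dic_mult_fst[OF xyz(3), of j c e] yz apply simp
    using yz by (metis Dic_mult_snd snd_conv)
  show ?thesis
  proof (rule pair_eqI_int)
    have L: "int (fst ((i',b') \<otimes>\<^bsub>Dic n\<^esub> (k,e))) = (int i' + (if b' then - int k else int k) + (if b' \<and> e then int n else 0)) mod (2 * int n)"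
      using xyz by (simp add: Dic_mult_fst)
    have R: "int (fst ((i,b) \<otimes>\<^bsub>Dic n\<^esub> (j',c'))) = (int i + (if b then - int j' else int j') + (if b \<and> c' then int n else 0)) mod (2 * int n)"
      using j' by (simp add: Dic_mult_fst)
    show "int (fst (((i,b) \<otimes>\<^bsub>Dic n\<^esub> (j,c)) \<otimes>\<^bsub>Dic n\<^esub> (k,e))) = int (fst ((i,b) \<otimes>\<^bsub>Dic n\<^esub> ((j,c) \<otimes>\<^bsub>Dic n\<^esub> (k,e))))"
      unfolding xy yz L R unfolding ij jk
      apply (cases b; cases c; cases e)
      apply (simp_all add: mod_simps modA modB modC modD)
      apply (simp_all add: mod_eq_dvd_iff algebra_simps)
      done
  next
    show "snd (((i,b) \<otimes>\<^bsub>Dic n\<^esub> (j,c)) \<otimes>\<^bsub>Dic n\<^esub> (k,e)) = snd ((i,b) \<otimes>\<^bsub>Dic n\<^esub> ((j,c) \<otimes>\<^bsub>Dic n\<^esub> (k,e)))"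
      unfolding xy yz using ij jk by (simp add: Dic_mult_snd) blast
  qed
qed

lemma Dic_group: assumes "0 < n" shows "group (Dic n)"
proof (rule groupI)
  fix x y assume "x \<in> carrier (Dic n)" "y \<in> carrier (Dic n)"
  then show "x \<otimes>\<^bsub>Dic n\<^esub> y \<in> carrier (Dic n)" using assms
    by (cases x; cases y) (auto simp: Dic_carrier mem_Times_iff Dic_mult_lt)
next
  show "\<one>\<^bsub>Dic n\<^esub> \<in> carrier (Dic n)" using assms by (simp add: Dic_carrier Dic_one)
next
  fix x assume "x \<in> carrier (Dic n)"
  then show "\<one>\<^bsub>Dic n\<^esub> \<otimes>\<^bsub>Dic n\<^esub> x = x"
    by (cases x) (auto simp: Dic_carrier Dic_one Dic_def)
next
  fix x assume "x \<in> carrier (Dic n)"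
  then obtain i b where x: "x = (i,b)" "i < 2*n" by (cases x) (auto simp: Dic_carrier)
  let ?y = "if b then ((i + n) mod (2*n), True) else ((2*n - i) mod (2*n), False)"
  have "?y \<otimes>\<^bsub>Dic n\<^esub> x = \<one>\<^bsub>Dic n\<^esub>"
  proof (rule pair_eqI_int)
    show "int (fst (?y \<otimes>\<^bsub>Dic n\<^esub> x)) = int (fst (\<one>\<^bsub>Dic n\<^esub>))"
      using x assms
    proof (cases b)
      case True
      have "((int i + int n) mod (2 * int n) + (int n - int i)) mod (2 * int n) = ((int i + int n) + (int n - int i)) mod (2 * int n)"
        by (rule mod_add_left_eq)
      then show ?thesis using True x assms by (simp add: Dic_mult_fst Dic_one zmod_int algebra_simps)
    qed (use x assms in \<open>simp_all add: Dic_mult_fst Dic_one zmod_int of_nat_diff mod_simps\<close>)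
  qed (cases b; simp add: x Dic_mult_snd Dic_one)
  moreover have "?y \<in> carrier (Dic n)" using assms by (simp add: Dic_carrier)
  ultimately show "\<exists>y\<in>carrier (Dic n). y \<otimes>\<^bsub>Dic n\<^esub> x = \<one>\<^bsub>Dic n\<^esub>" by blast
next
  fix x y z assume "x \<in> carrier (Dic n)" "y \<in> carrier (Dic n)" "z \<in> carrier (Dic n)"
  then show "x \<otimes>\<^bsub>Dic n\<^esub> y \<otimes>\<^bsub>Dic n\<^esub> z = x \<otimes>\<^bsub>Dic n\<^esub> (y \<otimes>\<^bsub>Dic n\<^esub> z)"
    using Dic_assoc[OF assms] by (cases x; cases y; cases z) (auto simp: Dic_carrier)
qed


definition Rs :: "nat \<Rightarrow> nat \<Rightarrow> (nat \<times> bool) set" where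
  "Rs n d = {(i,b). i < 2*n \<and> \<not> b \<and> d dvd i}"
definition Ss :: "nat \<Rightarrow> nat \<Rightarrow> nat \<Rightarrow> (nat \<times> bool) set" where
  "Ss n d r = {(i,b). i < 2*n \<and> int d dvd (int i - (if b then int r else 0))}"

lemma modN_dvd: "(d::int) dvd N \<Longrightarrow> d dvd (E mod N - E)"
proof -
  assume "d dvd N"
  moreover have "E mod N - E = - (N * (E div N))" by (simp add: minus_div_mult_eq_mod[symmetric] algebra_simps)
  ultimately show ?thesis by simp
qed

lemma Dic_mult_dvd:
  assumes "j < 2*n" "int d dvd 2 * int n" "int d dvd (int i - x)" "int d dvd (int j - y)"
  shows "int d dvd (int (fst ((i,b) \<otimes>\<^bsub>Dic n\<^esub> (j,c))) - (x + (if b then - y else y) + (if b \<and> c then int n else 0)))"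
proof -
  let ?E = "int i + (if b then - int j else int j) + (if b \<and> c then int n else 0)"
  have 1: "int d dvd (?E mod (2 * int n) - ?E)" using assms(2) by (rule modN_dvd)
  have 2: "int d dvd (if b then - (int j - y) else (int j - y))" using assms(4) by (cases b) (simp_all only: dvd_minus_iff if_True if_False)
  have "int (fst ((i,b) \<otimes>\<^bsub>Dic n\<^esub> (j,c))) - (x + (if b then - y else y) + (if b \<and> c then int n else 0))
     = (?E mod (2 * int n) - ?E) + (int i - x) + (if b then - (int j - y) else (int j - y))"
    using assms(1) by (simp add: Dic_mult_fst)
  then show ?thesis using 1 2 assms(3) by (metis dvd_add)
qed

lemma Dic_linv:
  assumes "0 < n" "i < 2*n"
  shows "(if b then ((i + n) mod (2*n), True) else ((2*n - i) mod (2*n), False)) \<otimes>\<^bsub>Dic n\<^esub> (i,b) = \<one>\<^bsub>Dic n\<^esub>"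
proof (rule pair_eqI_int)
  show "int (fst ((if b then ((i + n) mod (2*n), True) else ((2*n - i) mod (2*n), False)) \<otimes>\<^bsub>Dic n\<^esub> (i,b))) = int (fst (\<one>\<^bsub>Dic n\<^esub>))"
  proof (cases b)
    case True
    have "((int i + int n) mod (2 * int n) + (int n - int i)) mod (2 * int n) = ((int i + int n) + (int n - int i)) mod (2 * int n)"
      by (rule mod_add_left_eq)
    then show ?thesis using True assms by (simp add: Dic_mult_fst Dic_one zmod_int algebra_simps)
  qed (use assms in \<open>simp_all add: Dic_mult_fst Dic_one zmod_int of_nat_diff mod_simps\<close>)
qed (cases b; simp add: Dic_mult_snd Dic_one)

lemma Dic_inv:
  assumes "0 < n" "i < 2*n"
  shows "inv\<^bsub>Dic n\<^esub> (i,b) = (if b then ((i + n) mod (2*n), True) else ((2*n - i) mod (2*n), False))"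
  using group.inv_equality[OF Dic_group[OF assms(1)] Dic_linv[OF assms]] assms
  by (simp add: Dic_carrier)

lemma Ss_sub:
  assumes "0 < n" "d dvd n"
  shows "subgroup (Ss n d r) (Dic n)"
proof (rule group.subgroupI[OF Dic_group[OF assms(1)]])
  have dn: "int d dvd int n" using assms by simp
  have d2n: "int d dvd 2 * int n" using dn by simp
  show "Ss n d r \<subseteq> carrier (Dic n)" by (auto simp: Ss_def Dic_carrier)
  show "Ss n d r \<noteq> {}" using assms by (auto simp: Ss_def intro!: exI[of _ 0])
  fix a assume "a \<in> Ss n d r"
  then obtain i b where a: "a = (i,b)" "i < 2*n" "int d dvd (int i - (if b then int r else 0))"
    by (auto simp: Ss_def)
  show "inv\<^bsub>Dic n\<^esub> a \<in> Ss n d r"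
  proof (cases b)
    case True
    have "int d dvd ((int i + int n) mod (2 * int n) - (int i + int n))" using d2n by (rule modN_dvd)
    moreover have "(int i + int n) mod (2 * int n) - int r = ((int i + int n) mod (2 * int n) - (int i + int n)) + (int i - int r) + int n"
      by simp
    ultimately have "int d dvd ((int i + int n) mod (2 * int n) - int r)"
      using a True dn by (metis dvd_add)
    then show ?thesis using a True assms by (simp add: Dic_inv Ss_def zmod_int)
  next
    case False
    have "int d dvd ((- int i) mod (2 * int n) - (- int i))" using d2n by (rule modN_dvd)
    moreover have "(- int i) mod (2 * int n) = ((- int i) mod (2 * int n) - (- int i)) - int i" by simp
    moreover have "int d dvd int i" using a False by simp
    ultimately have "int d dvd ((- int i) mod (2 * int n))" by (metis dvd_diff)
    moreover have "int ((2 * n - i) mod (2 * n)) = (- int i) mod (2 * int n)"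
      using a by (simp add: zmod_int of_nat_diff mod_simps)
    ultimately show ?thesis using a False assms by (simp add: Dic_inv Ss_def)
  qed
next
  have dn: "int d dvd int n" using assms by simp
  have d2n: "int d dvd 2 * int n" using dn by simp
  fix a c assume "a \<in> Ss n d r" "c \<in> Ss n d r"
  then obtain i b j e where ac: "a = (i,b)" "i < 2*n" "int d dvd (int i - (if b then int r else 0))"
     "c = (j,e)" "j < 2*n" "int d dvd (int j - (if e then int r else 0))"
    by (auto simp: Ss_def)
  have 1: "int d dvd (int (fst ((i,b) \<otimes>\<^bsub>Dic n\<^esub> (j,e))) - ((if b then int r else 0) + (if b then - (if e then int r else 0) else (if e then int r else 0)) + (if b \<and> e then int n else 0)))"
    using Dic_mult_dvd[OF ac(5) d2n ac(3) ac(6)] .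
  have 2: "int d dvd (((if b then int r else 0) + (if b then - (if e then int r else 0) else (if e then int r else 0)) + (if b \<and> e then int n else 0)) - (if b \<noteq> e then int r else 0))"
    using dn by auto
  have "int d dvd (int (fst ((i,b) \<otimes>\<^bsub>Dic n\<^esub> (j,e))) - (if b \<noteq> e then int r else 0))"
    using dvd_add[OF 1 2] by simp
  moreover obtain v b' where p: "(i,b) \<otimes>\<^bsub>Dic n\<^esub> (j,e) = (v,b')" by fastforce
  moreover have "v < 2*n" using Dic_mult_lt[OF assms(1), of i b j e] p by simp
  moreover have "b' = (b \<noteq> e)" using p by (metis Dic_mult_snd snd_conv)
  ultimately show "a \<otimes>\<^bsub>Dic n\<^esub> c \<in> Ss n d r" using ac by (simp add: Ss_def)
qed

lemma Rs_sub:
  assumes "0 < n" "d dvd 2*n"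
  shows "subgroup (Rs n d) (Dic n)"
proof (rule group.subgroupI[OF Dic_group[OF assms(1)]])
  have d2n: "int d dvd 2 * int n" proof -
    have "int d dvd int (2*n)" using assms(2) by (simp only: of_nat_dvd_iff)
    then show ?thesis by simp
  qed
  show "Rs n d \<subseteq> carrier (Dic n)" by (auto simp: Rs_def Dic_carrier)
  show "Rs n d \<noteq> {}" using assms by (auto simp: Rs_def intro!: exI[of _ 0])
  fix a assume "a \<in> Rs n d"
  then obtain i where a: "a = (i,False)" "i < 2*n" "int d dvd int i"
    by (auto simp: Rs_def)
  have "int d dvd ((- int i) mod (2 * int n) - (- int i))" using d2n by (rule modN_dvd)
  moreover have "(- int i) mod (2 * int n) = ((- int i) mod (2 * int n) - (- int i)) - int i" by simp
  ultimately have "int d dvd ((- int i) mod (2 * int n))" using a by (metis dvd_diff)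
  moreover have "int ((2 * n - i) mod (2 * n)) = (- int i) mod (2 * int n)"
    using a by (simp add: zmod_int of_nat_diff mod_simps)
  ultimately have "int d dvd int ((2 * n - i) mod (2 * n))" by simp
  then show "inv\<^bsub>Dic n\<^esub> a \<in> Rs n d" using a assms by (simp add: Dic_inv Rs_def del: of_nat_dvd_iff)
next
  have d2n: "int d dvd 2 * int n" proof -
    have "int d dvd int (2*n)" using assms(2) by (simp only: of_nat_dvd_iff)
    then show ?thesis by simp
  qed
  fix a c assume "a \<in> Rs n d" "c \<in> Rs n d"
  then obtain i j where ac: "a = (i,False)" "i < 2*n" "int d dvd (int i - 0)"
     "c = (j,False)" "j < 2*n" "int d dvd (int j - 0)"
    by (auto simp: Rs_def)
  have "int d dvd (int (fst ((i,False) \<otimes>\<^bsub>Dic n\<^esub> (j,False))) - (0 + 0 + 0))"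
    using Dic_mult_dvd[OF ac(5) d2n ac(3) ac(6), of False False] by simp
  moreover obtain v b' where p: "(i,False) \<otimes>\<^bsub>Dic n\<^esub> (j,False) = (v,b')" by fastforce
  moreover have "v < 2*n" using Dic_mult_lt[OF assms(1), of i False j False] p by simp
  moreover have "b' = False" using p by (metis Dic_mult_snd snd_conv)
  ultimately show "a \<otimes>\<^bsub>Dic n\<^esub> c \<in> Rs n d" using ac by (simp add: Rs_def del: of_nat_dvd_iff)
qed



lemma subgroup_classify:
  assumes n: "0 < n" and H: "subgroup H (Dic n)"
  shows "(\<exists>d. d dvd 2*n \<and> H = Rs n d) \<or> (\<exists>d r. d dvd n \<and> r < d \<and> H = Ss n d r)"
proof -
  interpret H: subgroup H "Dic n" by (rule H)
  have Hc: "\<And>i b. (i,b) \<in> H \<Longrightarrow> i < 2*n" using H.subset by (auto simp: Dic_carrier)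
  define D where "D = {i. (i,False) \<in> H}"
  have D_lt: "\<And>i. i \<in> D \<Longrightarrow> i < 2*n" using Hc by (auto simp: D_def)
  have D0: "0 \<in> D" using H.one_closed by (simp add: D_def Dic_one)
  have Dadd: "\<And>i j. i \<in> D \<Longrightarrow> j \<in> D \<Longrightarrow> (i + j) mod (2*n) \<in> D"
  proof -
    fix i j assume "i \<in> D" "j \<in> D"
    then have "(i,False) \<otimes>\<^bsub>Dic n\<^esub> (j,False) \<in> H" by (auto simp: D_def)
    then show "(i + j) mod (2*n) \<in> D" by (simp add: D_def Dic_def)
  qed
  have Dneg: "\<And>i. i \<in> D \<Longrightarrow> (2*n - i) mod (2*n) \<in> D"
  proof -
    fix i assume i: "i \<in> D"
    then have "inv\<^bsub>Dic n\<^esub> (i,False) \<in> H" by (auto simp: D_def)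
    then show "(2*n - i) mod (2*n) \<in> D" using D_lt[OF i] n by (simp add: Dic_inv D_def)
  qed
  have Dmul: "\<And>i k. i \<in> D \<Longrightarrow> (k*i) mod (2*n) \<in> D"
  proof -
    fix i k assume i: "i \<in> D"
    show "(k*i) mod (2*n) \<in> D"
    proof (induction k)
      case 0 then show ?case using D0 by simp
    next
      case (Suc k)
      have "(Suc k * i) mod (2*n) = ((k*i) mod (2*n) + i) mod (2*n)" by (metis mod_add_left_eq mult_Suc add.commute)
      then show ?case using Dadd[OF Suc i] by simp
    qed
  qed
  define d where "d = (LEAST k. 0 < k \<and> k mod (2*n) \<in> D)"
  have ex: "0 < 2*n \<and> (2*n) mod (2*n) \<in> D" using n D0 by simp
  have d1: "0 < d \<and> d mod (2*n) \<in> D" unfolding d_def by (rule LeastI, rule ex)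
  have dmin: "\<And>k. 0 < k \<Longrightarrow> k mod (2*n) \<in> D \<Longrightarrow> d \<le> k" unfolding d_def by (rule Least_le) simp
  have dle: "d \<le> 2*n" using dmin ex by blast
  have multd: "\<And>k. (k*d) mod (2*n) \<in> D"
    using Dmul[OF conjunct2[OF d1]] by (simp add: mod_mult_right_eq)
  have ddvd: "d dvd 2*n"
  proof -
    define q where "q = (2*n) div d"
    define r where "r = (2*n) mod d"
    have qr: "q*d + r = 2*n" unfolding q_def r_def by simp
    have rd: "r < d" using d1 unfolding r_def by simp
    show ?thesis
    proof (cases "r = 0")
      case True then show ?thesis unfolding r_def by auto
    next
      case False
      have "q*d < 2*n" using qr False by linarith
      then have "q*d \<in> D" using multd[of q] by simp
      then have "(2*n - q*d) mod (2*n) \<in> D" by (rule Dneg)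
      moreover have "2*n - q*d = r" using qr by linarith
      ultimately have "r mod (2*n) \<in> D" using rd dle by simp
      then have "d \<le> r" using dmin False by simp
      then show ?thesis using rd by simp
    qed
  qed
  have Ddvd: "\<And>i. i \<in> D \<Longrightarrow> d dvd i"
  proof -
    fix i assume i: "i \<in> D"
    define q where "q = i div d"
    define r where "r = i mod d"
    have qr: "q*d + r = i" unfolding q_def r_def by simp
    have rd: "r < d" using d1 unfolding r_def by simp
    show "d dvd i"
    proof (cases "r = 0")
      case True then show ?thesis unfolding r_def by auto
    next
      case False
      have "q*d < 2*n" using qr D_lt[OF i] by linarith
      then have "q*d \<in> D" using multd[of q] by simp
      then have "(2*n - q*d) mod (2*n) \<in> D" by (rule Dneg)
      from Dadd[OF i this] have "(i + (2*n - q*d)) mod (2*n) \<in> D" by (simp add: mod_add_right_eq)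
      moreover have "i + (2*n - q*d) = 2*n + r" using qr \<open>q*d < 2*n\<close> by linarith
      ultimately have "r mod (2*n) \<in> D" by simp
      then have "d \<le> r" using dmin False by simp
      then show ?thesis using rd by simp
    qed
  qed
  have dvdD: "\<And>i. d dvd i \<Longrightarrow> i < 2*n \<Longrightarrow> i \<in> D"
  proof -
    fix i assume "d dvd i" "i < 2*n"
    then obtain k where "i = d*k" by blast
    then show "i \<in> D" using multd[of k] \<open>i < 2*n\<close> by (simp add: mult.commute)
  qed
  show ?thesis
  proof (cases "\<exists>r0. (r0,True) \<in> H")
    case False
    have "H = Rs n d"
    proof
      show "H \<subseteq> Rs n d"
      proof
        fix x assume x: "x \<in> H"
        obtain i b where xi: "x = (i,b)" by fastforce
        have "\<not> b" using False x xi by (cases b) auto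
        then have "i \<in> D" using x xi by (simp add: D_def)
        then show "x \<in> Rs n d" using xi \<open>\<not> b\<close> Ddvd D_lt by (simp add: Rs_def)
      qed
      show "Rs n d \<subseteq> H" using dvdD by (auto simp: Rs_def D_def)
    qed
    then show ?thesis using ddvd by blast
  next
    case True
    then obtain r0 where r0: "(r0,True) \<in> H" by blast
    have r0lt: "r0 < 2*n" using Hc[OF r0] .
    have "(r0,True) \<otimes>\<^bsub>Dic n\<^esub> (r0,True) = (n, False)"
    proof (rule pair_eqI_int)
      show "int (fst ((r0,True) \<otimes>\<^bsub>Dic n\<^esub> (r0,True))) = int (fst (n, False))"
        using r0lt n by (simp add: Dic_mult_fst)
    qed (simp add: Dic_mult_snd)
    then have "n \<in> D" using H.m_closed[OF r0 r0] by (simp add: D_def)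
    then have dn: "d dvd n" by (rule Ddvd)
    have idn: "int d dvd int n" using dn by simp
    have id2n: "int d dvd 2 * int n" using idn by simp
    have "H = Ss n d (r0 mod d)"
    proof
      show "H \<subseteq> Ss n d (r0 mod d)"
      proof
        fix x assume x: "x \<in> H"
        obtain i b where xi: "x = (i,b)" by fastforce
        have ilt: "i < 2*n" using Hc x xi by blast
        show "x \<in> Ss n d (r0 mod d)"
        proof (cases b)
          case False
          then have "d dvd i" using x xi Ddvd by (simp add: D_def)
          then show ?thesis using xi False ilt by (simp add: Ss_def)
        next
          case True
          obtain v c where vc: "(r0,True) \<otimes>\<^bsub>Dic n\<^esub> (i,True) = (v,c)" by fastforce
          have c: "c = False" using vc by (metis Dic_mult_snd snd_conv)
          have "(v,c) \<in> H" using H.m_closed[OF r0, of "(i,True)"] x xi True vc by simp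
          then have "v \<in> D" using c by (simp add: D_def)
          then have dv: "int d dvd int v" using Ddvd by simp
          have "int d dvd (int v - (int r0 + (- int i) + int n))"
            using Dic_mult_dvd[OF ilt id2n, of r0 "int r0" "int i" True True] vc by simp
          then have "int d dvd (int v - (int v - (int r0 + (- int i) + int n)) - int n)"
            using dv idn by (metis dvd_diff)
          moreover have "int v - (int v - (int r0 + (- int i) + int n)) - int n = - (int i - int r0)" by simp
          ultimately have 1: "int d dvd (int i - int r0)" by (metis dvd_minus_iff)
          have 2: "int d dvd (int r0 mod int d - int r0)" by (rule modN_dvd) simp
          have "int d dvd (int i - int (r0 mod d))"
            using dvd_diff[OF 1 2] by (simp add: zmod_int)
          then show ?thesis using xi True ilt by (simp add: Ss_def)
        qed
      qed
      show "Ss n d (r0 mod d) \<subseteq> H"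
      proof
        fix x assume x: "x \<in> Ss n d (r0 mod d)"
        obtain i b where xi: "x = (i,b)" by fastforce
        have ilt: "i < 2*n" and dv: "int d dvd (int i - (if b then int (r0 mod d) else 0))"
          using x xi by (auto simp: Ss_def)
        show "x \<in> H"
        proof (cases b)
          case False
          then show ?thesis using dv ilt dvdD xi by (simp add: D_def)
        next
          case True
          define j where "j = nat ((int r0 - int i) mod (2 * int n))"
          have jint: "int j = (int r0 - int i) mod (2 * int n)" unfolding j_def using n by simp
          have "int j < 2 * int n" using jint n by simp
          then have jlt: "j < 2*n" by linarith
          have 1: "int d dvd (int i - int r0)"
          proof -
            have 2: "int d dvd (int r0 mod int d - int r0)" by (rule modN_dvd) simp
            show ?thesis using dvd_add[OF dv 2] True by (simp add: zmod_int)
          qed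
          have "int d dvd ((int r0 - int i) mod (2 * int n) - (int r0 - int i))" using id2n by (rule modN_dvd)
          moreover have "int j = ((int r0 - int i) mod (2 * int n) - (int r0 - int i)) - (int i - int r0)"
            using jint by simp
          ultimately have "int d dvd int j" using 1 by (metis dvd_diff)
          then have "j \<in> D" using dvdD jlt by simp
          then have "(r0,True) \<otimes>\<^bsub>Dic n\<^esub> (j,False) \<in> H" using r0 by (simp add: D_def)
          moreover have "(r0,True) \<otimes>\<^bsub>Dic n\<^esub> (j,False) = (i,True)"
          proof (rule pair_eqI_int)
            have "(int r0 - (int r0 - int i) mod (2 * int n)) mod (2 * int n) = (int r0 - (int r0 - int i)) mod (2 * int n)"
              by (rule mod_diff_right_eq)
            then show "int (fst ((r0,True) \<otimes>\<^bsub>Dic n\<^esub> (j,False))) = int (fst (i,True))"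
              using jlt jint ilt by (simp add: Dic_mult_fst)
          qed (simp add: Dic_mult_snd)
          ultimately show ?thesis using xi True by simp
        qed
      qed
    qed
    moreover have "r0 mod d < d" using d1 by simp
    ultimately show ?thesis using dn by blast
  qed
qed



lemma negmod_int: "i < 2*n \<Longrightarrow> int ((2*n - i) mod (2*n)) = (- int i) mod (2 * int n)"
  by (simp add: zmod_int of_nat_diff mod_simps)

lemma negmod_dvd: "(d::nat) dvd 2*n \<Longrightarrow> d dvd i \<Longrightarrow> i < 2*n \<Longrightarrow> d dvd (2*n - i) mod (2*n)"
  by (simp add: dvd_diff_nat dvd_mod)

lemma Rs_comm:
  assumes n: "0 < n" and d: "d dvd 2*n" and K: "K \<subseteq> carrier (Dic n)"
  shows "Rs n d <#>\<^bsub>Dic n\<^esub> K = K <#>\<^bsub>Dic n\<^esub> Rs n d"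
proof -
  have key: "\<And>i j c. i < 2*n \<Longrightarrow> j < 2*n \<Longrightarrow>
     (i,False) \<otimes>\<^bsub>Dic n\<^esub> (j,c) = (j,c) \<otimes>\<^bsub>Dic n\<^esub> (if c then (2*n - i) mod (2*n) else i, False)
   \<and> (j,c) \<otimes>\<^bsub>Dic n\<^esub> (i,False) = (if c then (2*n - i) mod (2*n) else i, False) \<otimes>\<^bsub>Dic n\<^esub> (j,c)"
  proof -
    fix i j c assume ij: "i < (2::nat)*n" "j < 2*n"
    have lt: "(2*n - i) mod (2*n) < 2*n" using n by simp
    have ni: "int ((2*n - i) mod (2*n)) = (- int i) mod (2 * int n)" using ij(1) by (rule negmod_int)
    have m1: "(int j - (- int i) mod (2 * int n)) mod (2 * int n) = (int j - (- int i)) mod (2 * int n)"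
      by (rule mod_diff_right_eq)
    have m2: "((- int i) mod (2 * int n) + int j) mod (2 * int n) = ((- int i) + int j) mod (2 * int n)"
      by (rule mod_add_left_eq)
    show "?thesis i j c"
    proof (cases c)
      case True
      show ?thesis
      proof
        show "(i,False) \<otimes>\<^bsub>Dic n\<^esub> (j,c) = (j,c) \<otimes>\<^bsub>Dic n\<^esub> (if c then (2*n - i) mod (2*n) else i, False)"
          by (rule pair_eqI_int) (use True ij lt m1 in \<open>simp_all add: Dic_mult_fst Dic_mult_snd ni add.commute\<close>)
        show "(j,c) \<otimes>\<^bsub>Dic n\<^esub> (i,False) = (if c then (2*n - i) mod (2*n) else i, False) \<otimes>\<^bsub>Dic n\<^esub> (j,c)"
          by (rule pair_eqI_int) (use True ij lt m2 in \<open>simp_all add: Dic_mult_fst Dic_mult_snd ni add.commute\<close>)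
      qed
    next
      case False
      show ?thesis
        by (intro conjI; rule pair_eqI_int) (use False ij in \<open>simp_all add: Dic_mult_fst Dic_mult_snd algebra_simps\<close>)
    qed
  qed
  have mem: "\<And>i c. (i,False) \<in> Rs n d \<Longrightarrow> (if c then (2*n - i) mod (2*n) else i, False) \<in> Rs n d"
    using d n by (auto simp: Rs_def negmod_dvd)
  show ?thesis
  proof
    show "Rs n d <#>\<^bsub>Dic n\<^esub> K \<subseteq> K <#>\<^bsub>Dic n\<^esub> Rs n d"
    proof
      fix x assume "x \<in> Rs n d <#>\<^bsub>Dic n\<^esub> K"
      then obtain h k where hk: "h \<in> Rs n d" "k \<in> K" "x = h \<otimes>\<^bsub>Dic n\<^esub> k" unfolding set_mult_def by blast
      obtain i where i: "h = (i,False)" "i < 2*n" using hk(1) by (auto simp: Rs_def)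
      obtain j c where j: "k = (j,c)" "j < 2*n" using hk(2) K by (cases k) (auto simp: Dic_carrier)
      have "x = k \<otimes>\<^bsub>Dic n\<^esub> (if c then (2*n - i) mod (2*n) else i, False)"
        using key[OF i(2) j(2), of c] hk(3) i j by simp
      moreover have "(if c then (2*n - i) mod (2*n) else i, False) \<in> Rs n d" using mem hk(1) i by simp
      ultimately show "x \<in> K <#>\<^bsub>Dic n\<^esub> Rs n d" using hk(2) unfolding set_mult_def by blast
    qed
    show "K <#>\<^bsub>Dic n\<^esub> Rs n d \<subseteq> Rs n d <#>\<^bsub>Dic n\<^esub> K"
    proof
      fix x assume "x \<in> K <#>\<^bsub>Dic n\<^esub> Rs n d"
      then obtain h k where hk: "h \<in> Rs n d" "k \<in> K" "x = k \<otimes>\<^bsub>Dic n\<^esub> h" unfolding set_mult_def by blast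
      obtain i where i: "h = (i,False)" "i < 2*n" using hk(1) by (auto simp: Rs_def)
      obtain j c where j: "k = (j,c)" "j < 2*n" using hk(2) K by (cases k) (auto simp: Dic_carrier)
      have "x = (if c then (2*n - i) mod (2*n) else i, False) \<otimes>\<^bsub>Dic n\<^esub> k"
        using key[OF i(2) j(2), of c] hk(3) i j by simp
      moreover have "(if c then (2*n - i) mod (2*n) else i, False) \<in> Rs n d" using mem hk(1) i by simp
      ultimately show "x \<in> Rs n d <#>\<^bsub>Dic n\<^esub> K" using hk(2) unfolding set_mult_def by blast
    qed
  qed
qed

lemma in_set_multI: "a \<in> A \<Longrightarrow> b \<in> B \<Longrightarrow> x = a \<otimes>\<^bsub>G\<^esub> b \<Longrightarrow> x \<in> A <#>\<^bsub>G\<^esub> B"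
  unfolding set_mult_def by blast

lemma Ss_memF: "(i,False) \<in> Ss n d r \<longleftrightarrow> i < 2*n \<and> d dvd i"
  by (simp add: Ss_def)

lemma Ss_memT: "(i,True) \<in> Ss n d r \<longleftrightarrow> i < 2*n \<and> int d dvd (int i - int r)"
  by (simp add: Ss_def)

lemma SS_sub:
  assumes n: "0 < n" and d1: "d1 dvd n" and d2: "d2 dvd n"
    and cond: "int (gcd d1 d2) dvd 2 * (int r1 - int r2)"
  shows "Ss n d1 r1 <#>\<^bsub>Dic n\<^esub> Ss n d2 r2 \<subseteq> Ss n d2 r2 <#>\<^bsub>Dic n\<^esub> Ss n d1 r1"
proof
  fix x assume "x \<in> Ss n d1 r1 <#>\<^bsub>Dic n\<^esub> Ss n d2 r2"
  then obtain h k where hk: "h \<in> Ss n d1 r1" "k \<in> Ss n d2 r2" "x = h \<otimes>\<^bsub>Dic n\<^esub> k"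
    unfolding set_mult_def by blast
  obtain i b where hi: "h = (i,b)" by fastforce
  obtain j c where kj: "k = (j,c)" by fastforce
  have ilt: "i < 2*n" and di: "int d1 dvd (int i - (if b then int r1 else 0))" using hk(1) hi by (auto simp: Ss_def)
  have jlt: "j < 2*n" and dj: "int d2 dvd (int j - (if c then int r2 else 0))" using hk(2) kj by (auto simp: Ss_def)
  have d12n: "d1 dvd 2*n" "d2 dvd 2*n" using d1 d2 by auto
  have id12n: "int d1 dvd 2 * int n" "int d2 dvd 2 * int n" using d1 d2 by simp_all
  show "x \<in> Ss n d2 r2 <#>\<^bsub>Dic n\<^esub> Ss n d1 r1"
  proof (cases b)
    case False note b = this
    show ?thesis
    proof (cases c)
      case False
      show ?thesis
      proof (rule in_set_multI[OF hk(2) hk(1)])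
        show "x = k \<otimes>\<^bsub>Dic n\<^esub> h" unfolding hk(3) hi kj using b False ilt jlt
          by (intro pair_eqI_int) (simp_all add: Dic_mult_fst Dic_mult_snd add.commute)
      qed
    next
      case True
      let ?h' = "((2*n - i) mod (2*n), False)"
      have "d1 dvd i" using di b by simp
      then have "?h' \<in> Ss n d1 r1" using d12n(1) ilt n by (simp add: Ss_memF negmod_dvd)
      moreover have "x = k \<otimes>\<^bsub>Dic n\<^esub> ?h'"
      proof -
        have ni: "int ((2*n - i) mod (2*n)) = (- int i) mod (2 * int n)" using ilt by (rule negmod_int)
        have m1: "(int j - (- int i) mod (2 * int n)) mod (2 * int n) = (int j - (- int i)) mod (2 * int n)"
          by (rule mod_diff_right_eq)
        have lt: "(2*n - i) mod (2*n) < 2*n" using n by simp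
        show ?thesis unfolding hk(3) hi kj using b True ilt jlt lt m1
          by (intro pair_eqI_int) (simp_all add: Dic_mult_fst Dic_mult_snd ni add.commute)
      qed
      ultimately show ?thesis using hk(2) by (auto intro: in_set_multI[where G="Dic n"])
    qed
  next
    case True note b = this
    show ?thesis
    proof (cases c)
      case False
      let ?k' = "((2*n - j) mod (2*n), False)"
      have "d2 dvd j" using dj False by simp
      then have "?k' \<in> Ss n d2 r2" using d12n(2) jlt n by (simp add: Ss_memF negmod_dvd)
      moreover have "x = ?k' \<otimes>\<^bsub>Dic n\<^esub> h"
      proof -
        have nj: "int ((2*n - j) mod (2*n)) = (- int j) mod (2 * int n)" using jlt by (rule negmod_int)
        have m2: "((- int j) mod (2 * int n) + int i) mod (2 * int n) = ((- int j) + int i) mod (2 * int n)"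
          by (rule mod_add_left_eq)
        show ?thesis unfolding hk(3) hi kj using b False ilt jlt m2
          by (intro pair_eqI_int) (simp_all add: Dic_mult_fst Dic_mult_snd nj add.commute)
      qed
      ultimately show ?thesis using hk(1) by (auto intro: in_set_multI[where G="Dic n"])
    next
      case True note c = this
      define g where "g = gcd d1 d2"
      obtain u v where uv: "u * int d1 + v * int d2 = int g"
        using bezout_int[of "int d1" "int d2"] unfolding g_def by auto
      have gd1: "int g dvd int d1" and gd2: "int g dvd int d2" unfolding g_def by simp_all
      have c1: "int g dvd 2 * (int r1 - int r2)" using cond unfolding g_def .
      have c2: "int g dvd 2 * (int i - int r1)" using dvd_trans[OF gd1, of "int i - int r1"] di b by (simp only: if_True dvd_mult)
      have c3: "int g dvd 2 * (int j - int r2)" using dvd_trans[OF gd2, of "int j - int r2"] dj c by (simp only: if_True dvd_mult)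
      have "int g dvd 2 * (int r1 - int r2) + 2 * (int i - int r1) - 2 * (int j - int r2)"
        using c1 c2 c3 by (intro dvd_diff dvd_add)
      moreover have "2 * (int r1 - int r2) + 2 * (int i - int r1) - 2 * (int j - int r2) = 2 * (int i - int j)"
        by simp
      ultimately obtain t where t: "2 * (int i - int j) = int g * t" by (metis dvdE)
      define i' where "i' = nat ((int i - t*u*int d1) mod (2 * int n))"
      define j' where "j' = nat ((int j + t*v*int d2) mod (2 * int n))"
      have ii': "int i' = (int i - t*u*int d1) mod (2 * int n)" unfolding i'_def using n by simp
      have jj': "int j' = (int j + t*v*int d2) mod (2 * int n)" unfolding j'_def using n by simp
      have "int i' < 2 * int n" using ii' n by simp
      then have i'lt: "i' < 2*n" by linarith
      have "int j' < 2 * int n" using jj' n by simp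
      then have j'lt: "j' < 2*n" by linarith
      have "(i',True) \<in> Ss n d1 r1"
      proof -
        have 1: "int d1 dvd (int i' - (int i - t*u*int d1))" unfolding ii' using id12n(1) by (rule modN_dvd)
        have 2: "int d1 dvd (int i - int r1)" using di b by simp
        have 3: "int d1 dvd (t*u*int d1)" by simp
        have "int i' - int r1 = (int i' - (int i - t*u*int d1)) + (int i - int r1) - t*u*int d1" by simp
        then have "int d1 dvd (int i' - int r1)" using 1 2 3 by (metis dvd_add dvd_diff)
        then show ?thesis using i'lt by (simp add: Ss_memT)
      qed
      moreover have "(j',True) \<in> Ss n d2 r2"
      proof -
        have 1: "int d2 dvd (int j' - (int j + t*v*int d2))" unfolding jj' using id12n(2) by (rule modN_dvd)
        have 2: "int d2 dvd (int j - int r2)" using dj c by simp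
        have 3: "int d2 dvd (t*v*int d2)" by simp
        have "int j' - int r2 = (int j' - (int j + t*v*int d2)) + (int j - int r2) + t*v*int d2" by simp
        then have "int d2 dvd (int j' - int r2)" using 1 2 3 by (metis dvd_add)
        then show ?thesis using j'lt by (simp add: Ss_memT)
      qed
      moreover have "x = (j',True) \<otimes>\<^bsub>Dic n\<^esub> (i',True)"
      proof (rule pair_eqI_int)
        have e1: "(int j' - int i' + int n) mod (2 * int n) = ((int j + t*v*int d2) - (int i - t*u*int d1) + int n) mod (2 * int n)"
          unfolding ii' jj' by (simp add: modA modD)
        have "t*v*int d2 + t*u*int d1 = int g * t" using uv by (simp add: algebra_simps uv[symmetric])
        then have s: "t*v*int d2 + t*u*int d1 = 2 * (int i - int j)" using t by simp
        have "(int j + t*v*int d2) - (int i - t*u*int d1) + int n = int j - int i + int n + (t*v*int d2 + t*u*int d1)"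
          by simp
        also have "\<dots> = int i - int j + int n" unfolding s by simp
        finally have e2: "(int j + t*v*int d2) - (int i - t*u*int d1) + int n = int i - int j + int n" .
        show "int (fst x) = int (fst ((j',True) \<otimes>\<^bsub>Dic n\<^esub> (i',True)))"
          unfolding hk(3) hi kj using b c jlt i'lt e1 e2 by (simp add: Dic_mult_fst)
        show "snd x = snd ((j',True) \<otimes>\<^bsub>Dic n\<^esub> (i',True))"
          unfolding hk(3) hi kj using b c by (simp add: Dic_mult_snd)
      qed
      ultimately show ?thesis by (auto intro: in_set_multI[where G="Dic n"])
    qed
  qed
qed

lemma SS_comm_imp:
  assumes n: "0 < n" and d1: "d1 dvd n" and d2: "d2 dvd n" and r1: "r1 < d1" and r2: "r2 < d2"
    and eq: "Ss n d1 r1 <#>\<^bsub>Dic n\<^esub> Ss n d2 r2 = Ss n d2 r2 <#>\<^bsub>Dic n\<^esub> Ss n d1 r1"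
  shows "int (gcd d1 d2) dvd 2 * (int r1 - int r2)"
proof -
  have "d1 \<le> n" "d2 \<le> n" using d1 d2 n by (simp_all add: dvd_imp_le)
  then have lt: "r1 < 2*n" "r2 < 2*n" using r1 r2 by linarith+
  have h: "(r1,True) \<in> Ss n d1 r1" using lt by (simp add: Ss_memT)
  have k: "(r2,True) \<in> Ss n d2 r2" using lt by (simp add: Ss_memT)
  have "(r1,True) \<otimes>\<^bsub>Dic n\<^esub> (r2,True) \<in> Ss n d2 r2 <#>\<^bsub>Dic n\<^esub> Ss n d1 r1"
    using in_set_multI[where G="Dic n", OF h k refl] eq by simp
  then obtain k' h' where kh: "k' \<in> Ss n d2 r2" "h' \<in> Ss n d1 r1"
    "(r1,True) \<otimes>\<^bsub>Dic n\<^esub> (r2,True) = k' \<otimes>\<^bsub>Dic n\<^esub> h'"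
    unfolding set_mult_def by blast
  obtain j c where kj: "k' = (j,c)" by fastforce
  obtain i b where hi: "h' = (i,b)" by fastforce
  have ilt: "i < 2*n" and di: "int d1 dvd (int i - (if b then int r1 else 0))" using kh(2) hi by (auto simp: Ss_def)
  have jlt: "j < 2*n" and dj: "int d2 dvd (int j - (if c then int r2 else 0))" using kh(1) kj by (auto simp: Ss_def)
  define g where "g = gcd d1 d2"
  have gd1: "int g dvd int d1" and gd2: "int g dvd int d2" unfolding g_def by simp_all
  have gn: "int g dvd int n" using dvd_trans[OF gd2, of "int n"] d2 by (simp only: of_nat_dvd_iff)
  have g2n: "int g dvd 2 * int n" using gn by simp
  have cb: "c = b"
    using arg_cong[OF kh(3), of snd] kj hi by (simp add: Dic_mult_snd)
  have A: "int g dvd (int (fst ((r1,True) \<otimes>\<^bsub>Dic n\<^esub> (r2,True))) - (int r1 + (- int r2) + int n))"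
    using Dic_mult_dvd[OF lt(2) g2n, of r1 "int r1" "int r2" True True] by simp
  have B: "int g dvd (int (fst ((j,c) \<otimes>\<^bsub>Dic n\<^esub> (i,b))) - ((if c then int r2 else 0) + (if c then - (if b then int r1 else 0) else (if b then int r1 else 0)) + (if c \<and> b then int n else 0)))"
    using Dic_mult_dvd[OF ilt g2n dvd_trans[OF gd2 dj] dvd_trans[OF gd1 di], of c b] .
  have "int g dvd ((int r1 + (- int r2) + int n) - ((if c then int r2 else 0) + (if c then - (if b then int r1 else 0) else (if b then int r1 else 0)) + (if c \<and> b then int n else 0)))"
    using dvd_diff[OF B A] kh(3) kj hi by (simp add: algebra_simps)
  then have "int g dvd (if b then 2 * (int r1 - int r2) else (int r1 - int r2) + int n)"
    using cb by (cases b) (simp_all add: algebra_simps)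
  then have "int g dvd 2 * (int r1 - int r2)"
  proof (cases b)
    case False
    assume "int g dvd (if b then 2 * (int r1 - int r2) else (int r1 - int r2) + int n)"
    then have "int g dvd (int r1 - int r2) + int n" using False by simp
    then have "int g dvd (int r1 - int r2)" using gn by (metis dvd_add_left_iff)
    then show ?thesis by (rule dvd_mult)
  qed simp
  then show ?thesis unfolding g_def .
qed



abbreviation D :: "nat \<Rightarrow> nat set" where "D n \<equiv> {d. d dvd n}"

lemma div_bij:
  assumes cop: "coprime u v" and u: "u > 0" and v: "v > 0"
  shows "bij_betw (\<lambda>(x,y). x*y) (D u \<times> D v) (D (u*v))"
proof (rule bij_betwI')
  fix p q assume p: "p \<in> D u \<times> D v" and q: "q \<in> D u \<times> D v"
  obtain x1 y1 where p': "p = (x1,y1)" "x1 dvd u" "y1 dvd v" using p by auto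
  obtain x2 y2 where q': "q = (x2,y2)" "x2 dvd u" "y2 dvd v" using q by auto
  show "((\<lambda>(x,y). x*y) p = (\<lambda>(x,y). x*y) q) = (p = q)"
  proof
    assume eq: "(\<lambda>(x,y). x*y) p = (\<lambda>(x,y). x*y) q"
    then have e: "x1*y1 = x2*y2" using p' q' by simp
    have c12: "coprime x1 y2" using coprime_divisors[OF p'(2) q'(3) cop] .
    have c21: "coprime x2 y1" using coprime_divisors[OF q'(2) p'(3) cop] .
    have "x1 dvd x2*y2" using e by (metis dvd_triv_left)
    then have "x1 dvd x2" using c12 by (simp add: coprime_dvd_mult_left_iff)
    moreover have "x2 dvd x1*y1" using e by (metis dvd_triv_left)
    then have "x2 dvd x1" using c21 by (simp add: coprime_dvd_mult_left_iff)
    ultimately have "x1 = x2" by (rule dvd_antisym)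
    moreover have "x1 > 0" using p'(2) u by (metis dvd_0_left_iff gr0I less_numeral_extra(3))
    ultimately have "y1 = y2" using e by simp
    then show "p = q" using p' q' \<open>x1 = x2\<close> by simp
  qed simp
next
  fix p assume "p \<in> D u \<times> D v" then show "(\<lambda>(x,y). x*y) p \<in> D (u*v)"
    by (auto intro: mult_dvd_mono)
next
  fix d assume "d \<in> D (u*v)"
  then obtain x y where "d = x*y" "x dvd u" "y dvd v" using division_decomp[of d u v] by auto
  then show "\<exists>p \<in> D u \<times> D v. d = (\<lambda>(x,y). x*y) p" by auto
qed

lemma tau_mult:
  assumes "coprime u v" "u > 0" "v > 0"
  shows "tau (u*v) = tau u * tau v"
  using bij_betw_same_card[OF div_bij[OF assms]] by (simp add: tau_def card_cartesian_product)

lemma sum_D_mult: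
  assumes "coprime u v" "u > 0" "v > 0"
  shows "(\<Sum>d\<in>D (u*v). f d) = (\<Sum>p\<in>D u \<times> D v. f (fst p * snd p))"
  using sum.reindex_bij_betw[OF div_bij[OF assms], of f] by (simp add: case_prod_beta)

lemma sum_prod_split: "(\<Sum>p\<in>A\<times>B. f p) = (\<Sum>x\<in>A. \<Sum>y\<in>B. f (x,y))"
  by (simp add: sum.cartesian_product)

lemma double_sum_mult:
  fixes F :: "nat \<Rightarrow> nat \<Rightarrow> 'a::comm_semiring_1"
  assumes cop: "coprime u v" and u: "u > 0" and v: "v > 0"
    and F: "\<And>x1 x2 y1 y2. x1 dvd u \<Longrightarrow> x2 dvd u \<Longrightarrow> y1 dvd v \<Longrightarrow> y2 dvd v \<Longrightarrow>
         F (x1*y1) (x2*y2) = F1 x1 x2 * F2 y1 y2"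
  shows "(\<Sum>a\<in>D (u*v). \<Sum>b\<in>D (u*v). F a b) = (\<Sum>a\<in>D u. \<Sum>b\<in>D u. F1 a b) * (\<Sum>a\<in>D v. \<Sum>b\<in>D v. F2 a b)"
proof -
  have fu: "finite (D u)" and fv: "finite (D v)" using u v by simp_all
  have "(\<Sum>a\<in>D (u*v). \<Sum>b\<in>D (u*v). F a b) = (\<Sum>p\<in>D u \<times> D v. \<Sum>q\<in>D u \<times> D v. F (fst p * snd p) (fst q * snd q))"
    by (simp add: sum_D_mult[OF assms(1-3)])
  also have "\<dots> = (\<Sum>p\<in>D u \<times> D v. \<Sum>q\<in>D u \<times> D v. F1 (fst p) (fst q) * F2 (snd p) (snd q))"
    by (intro sum.cong refl) (auto simp: F)
  also have "\<dots> = (\<Sum>x1\<in>D u. \<Sum>y1\<in>D v. \<Sum>x2\<in>D u. \<Sum>y2\<in>D v. F1 x1 x2 * F2 y1 y2)"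
    by (simp only: sum_prod_split fst_conv snd_conv)
  also have "\<dots> = (\<Sum>x1\<in>D u. \<Sum>x2\<in>D u. \<Sum>y1\<in>D v. \<Sum>y2\<in>D v. F1 x1 x2 * F2 y1 y2)"
    by (rule sum.cong[OF refl]) (rule sum.swap)
  also have "\<dots> = (\<Sum>x1\<in>D u. \<Sum>x2\<in>D u. F1 x1 x2 * (\<Sum>a\<in>D v. \<Sum>b\<in>D v. F2 a b))"
    by (simp only: sum_distrib_left)
  also have "\<dots> = (\<Sum>a\<in>D u. \<Sum>b\<in>D u. F1 a b) * (\<Sum>a\<in>D v. \<Sum>b\<in>D v. F2 a b)"
    by (simp only: sum_distrib_right)
  finally show ?thesis .
qed

lemma lcm_mult_coprime:
  fixes u v x1 x2 y1 y2 :: nat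
  assumes cop: "coprime u v" and "x1 dvd u" "x2 dvd u" "y1 dvd v" "y2 dvd v"
  shows "lcm (x1*y1) (x2*y2) = lcm x1 x2 * lcm y1 y2"
proof (rule dvd_antisym)
  have "x1*y1 dvd lcm x1 x2 * lcm y1 y2" by (intro mult_dvd_mono) simp_all
  moreover have "x2*y2 dvd lcm x1 x2 * lcm y1 y2" by (intro mult_dvd_mono) simp_all
  ultimately show "lcm (x1*y1) (x2*y2) dvd lcm x1 x2 * lcm y1 y2" by (rule lcm_least)
next
  have c: "coprime (lcm x1 x2) (lcm y1 y2)"
    by (rule coprime_divisors[OF _ _ cop]) (simp_all add: assms lcm_least)
  have "lcm x1 x2 dvd lcm (x1*y1) (x2*y2)"
    by (rule lcm_least) (meson dvd_lcm1 dvd_lcm2 dvd_mult_left dvd_trans)+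
  moreover have "lcm y1 y2 dvd lcm (x1*y1) (x2*y2)"
    by (rule lcm_least) (meson dvd_lcm1 dvd_lcm2 dvd_mult_right dvd_trans)+
  ultimately show "lcm x1 x2 * lcm y1 y2 dvd lcm (x1*y1) (x2*y2)" using c by (rule divides_mult)
qed

definition hfun :: "nat \<Rightarrow> nat" where
  "hfun n = (\<Sum>a\<in>D n. \<Sum>b\<in>D n. lcm a b)"

definition Ffun :: "nat \<Rightarrow> nat \<Rightarrow> nat" where
  "Ffun a b = lcm a b * (if even a \<and> even b then 2 else 1)"

definition Wfun :: "nat \<Rightarrow> nat" where
  "Wfun n = (\<Sum>a\<in>D n. \<Sum>b\<in>D n. Ffun a b)"

lemma hfun_mult: "coprime u v \<Longrightarrow> u > 0 \<Longrightarrow> v > 0 \<Longrightarrow> hfun (u*v) = hfun u * hfun v"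
  unfolding hfun_def by (rule double_sum_mult) (auto intro: lcm_mult_coprime)

lemma Wfun_mult:
  assumes "coprime u v" "u > 0" "v > 0" "odd v"
  shows "Wfun (u*v) = Wfun u * hfun v"
  unfolding Wfun_def hfun_def
proof (rule double_sum_mult[OF assms(1-3)])
  fix x1 x2 y1 y2 assume xy: "x1 dvd u" "x2 dvd u" "y1 dvd v" "y2 dvd v"
  have "odd y1" "odd y2" using xy assms(4) by (meson dvd_trans)+
  then show "Ffun (x1*y1) (x2*y2) = Ffun x1 x2 * lcm y1 y2"
    unfolding Ffun_def lcm_mult_coprime[OF assms(1) xy] by auto
qed



lemma D_prime_pow:
  assumes p: "Factorial_Ring.prime (p::nat)"
  shows "D (p^k) = (\<lambda>i. p^i) ` {..k}" and "inj_on (\<lambda>i. p^i) {..k}"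
proof -
  show "D (p^k) = (\<lambda>i. p^i) ` {..k}" using divides_primepow_nat[OF p] by auto
  have "p > 1" using prime_gt_1_nat[OF p] by simp
  then show "inj_on (\<lambda>i. p^i) {..k}" by (auto simp: inj_on_def power_inject_exp)
qed

lemma lcm_pow: "lcm ((p::nat)^a) (p^b) = p^(max a b)"
  by (cases "a \<le> b") (simp_all add: le_imp_power_dvd max_def)

lemma sum_D_prime_pow:
  assumes p: "Factorial_Ring.prime (p::nat)"
  shows "(\<Sum>a\<in>D (p^k). \<Sum>b\<in>D (p^k). f a b) = (\<Sum>i\<le>k. \<Sum>j\<le>k. f (p^i) (p^j))"
  unfolding D_prime_pow(1)[OF p] by (simp add: sum.reindex[OF D_prime_pow(2)[OF p]])

lemma tau_prime_pow: "Factorial_Ring.prime (p::nat) \<Longrightarrow> tau (p^k) = k + 1"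
  unfolding tau_def using D_prime_pow[of p k] by (simp add: card_image)

lemma dsum_Suc:
  "(\<Sum>a\<le>Suc k. \<Sum>b\<le>Suc k. f a b) = (\<Sum>a\<le>k. \<Sum>b\<le>k. f a b) + (\<Sum>a\<le>k. f a (Suc k)) + (\<Sum>b\<le>Suc k. f (Suc k) b)"
  by (simp add: sum.distrib add_ac)

lemma pp_sum:
  fixes q :: real
  assumes "q \<noteq> 1"
  shows "(\<Sum>a\<le>k. \<Sum>b\<le>k. q^(max a b)) = ((2*k+1) * q^(k+2) - (2*k+3) * q^(k+1) + q + 1) / (q-1)^2"
proof (induction k)
  case 0
  have "(q-1)^2 \<noteq> 0" using assms by simp
  then show ?case by (simp add: field_simps power2_eq_square)
next
  case (Suc k)
  have 1: "(\<Sum>a\<le>k. q^(max a (Suc k))) = (k+1) * q^(Suc k)"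
    by (simp add: max_def)
  have 2: "(\<Sum>b\<le>Suc k. q^(max (Suc k) b)) = (k+2) * q^(Suc k)"
  proof -
    have "(\<Sum>b\<le>Suc k. q^(max (Suc k) b)) = (\<Sum>b\<le>Suc k. q^(Suc k))"
      by (intro sum.cong refl) (simp add: max_def)
    then show ?thesis by simp
  qed
  have ne: "(q-1)^2 \<noteq> 0" using assms by simp
  have "(\<Sum>a\<le>Suc k. \<Sum>b\<le>Suc k. q^(max a b)) = ((2*k+1) * q^(k+2) - (2*k+3) * q^(k+1) + q + 1) / (q-1)^2 + (2*k+3) * q^(Suc k)"
    unfolding dsum_Suc Suc 1 2 by (simp add: algebra_simps)
  also have "\<dots> = ((2*real (Suc k)+1) * q^(Suc k+2) - (2*real (Suc k)+3) * q^(Suc k+1) + q + 1) / (q-1)^2"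
    using ne by (simp add: field_simps power2_eq_square)
  finally show ?case .
qed

lemma if_sum: "(\<Sum>a\<le>(k::nat). (if 1 \<le> a then 2 else 1::real)) = 2*k+1"
  by (induction k) auto

lemma if_sum': "(\<Sum>a\<le>(k::nat). (if Suc 0 \<le> a then 2 else 1::real)) = 2*k+1"
  by (induction k) auto

lemma w2_sum:
  "(\<Sum>a\<le>k. \<Sum>b\<le>k. (2::real)^(max a b) * (if 1 \<le> a \<and> 1 \<le> b then 2 else 1)) = (real k - 1) * 2^(k+3) + 9"
proof (induction k)
  case 0 then show ?case by simp
next
  case (Suc k)
  have 1: "(\<Sum>a\<le>k. (2::real)^(max a (Suc k)) * (if 1 \<le> a \<and> 1 \<le> Suc k then 2 else 1)) = 2^(Suc k) * (2*k+1)"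
  proof -
    have "(\<Sum>a\<le>k. (2::real)^(max a (Suc k)) * (if 1 \<le> a \<and> 1 \<le> Suc k then 2 else 1)) = (\<Sum>a\<le>k. 2^(Suc k) * (if 1 \<le> a then 2 else 1))"
      by (intro sum.cong refl) (simp add: max_def)
    then show ?thesis by (simp add: sum_distrib_left[symmetric] if_sum if_sum' algebra_simps)
  qed
  have 2: "(\<Sum>b\<le>Suc k. (2::real)^(max (Suc k) b) * (if 1 \<le> Suc k \<and> 1 \<le> b then 2 else 1)) = 2^(Suc k) * (2*(k+1)+1)"
  proof -
    have "(\<Sum>b\<le>Suc k. (2::real)^(max (Suc k) b) * (if 1 \<le> Suc k \<and> 1 \<le> b then 2 else 1)) = (\<Sum>b\<le>Suc k. 2^(Suc k) * (if 1 \<le> b then 2 else 1))"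
      by (intro sum.cong refl) (simp add: max_def)
    then show ?thesis by (simp add: sum_distrib_left[symmetric] if_sum if_sum' algebra_simps)
  qed
  show ?case unfolding dsum_Suc Suc 1 2 by (simp add: field_simps power_add)
qed

lemma hfun_prime_pow:
  assumes p: "Factorial_Ring.prime (p::nat)"
  shows "real (hfun (p^k)) = ((2*real k+1) * real p^(k+2) - (2*real k+3) * real p^(k+1) + real p + 1) / (real p - 1)^2"
proof -
  have "real (hfun (p^k)) = (\<Sum>a\<le>k. \<Sum>b\<le>k. real p^(max a b))"
    unfolding hfun_def sum_D_prime_pow[OF p] by (simp add: lcm_pow)
  also have "\<dots> = ((2*real k+1) * real p^(k+2) - (2*real k+3) * real p^(k+1) + real p + 1) / (real p - 1)^2"
    using prime_gt_1_nat[OF p] by (intro pp_sum) simp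
  finally show ?thesis .
qed

lemma Wfun_two_pow:
  "real (Wfun (2^k)) = (real k - 1) * 2^(k+3) + 9"
proof -
  have "real (Wfun (2^k)) = (\<Sum>a\<le>k. \<Sum>b\<le>k. real (Ffun (2^a) (2^b)))"
    unfolding Wfun_def sum_D_prime_pow[OF two_is_prime_nat] by simp
  also have "\<dots> = (\<Sum>a\<le>k. \<Sum>b\<le>k. (2::real)^(max a b) * (if 1 \<le> a \<and> 1 \<le> b then 2 else 1))"
    by (intro sum.cong refl) (auto simp: Ffun_def lcm_pow)
  finally have "real (Wfun (2^k)) = (\<Sum>a\<le>k. \<Sum>b\<le>k. (2::real)^(max a b) * (if 1 \<le> a \<and> 1 \<le> b then 2 else 1))" .
  then show ?thesis using w2_sum by simp
qed

lemma hfun_prod: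
  assumes "finite P" "\<forall>p\<in>P. Factorial_Ring.prime p"
  shows "hfun (\<Prod>p\<in>P. p ^ e p) = (\<Prod>p\<in>P. hfun (p ^ e p))"
  using assms
proof (induction P rule: finite_induct)
  case empty
  show ?case by (simp add: hfun_def)
next
  case (insert x P)
  have px: "Factorial_Ring.prime x" using insert by simp
  have cop: "coprime (x ^ e x) (\<Prod>p\<in>P. p ^ e p)"
  proof (rule prod_coprime_right)
    fix q assume "q \<in> P"
    then have "Factorial_Ring.prime q" "q \<noteq> x" using insert by auto
    then show "coprime (x ^ e x) (q ^ e q)" using px by (simp add: primes_coprime)
  qed
  have pos1: "x ^ e x > 0" using px prime_gt_0_nat by simp
  have pos2: "(\<Prod>p\<in>P. p ^ e p) > 0" using insert prime_gt_0_nat by (simp add: prod_pos)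
  show ?case using insert hfun_mult[OF cop pos1 pos2] by simp
qed

lemma hfun_gfun:
  assumes "m' > 0"
  shows "real (hfun m') = gfun m'"
proof -
  have "hfun m' = hfun (\<Prod>p\<in>prime_factors m'. p ^ multiplicity p m')"
    using prime_factorization_nat[OF assms] by simp
  also have "\<dots> = (\<Prod>p\<in>prime_factors m'. hfun (p ^ multiplicity p m'))"
    by (rule hfun_prod) auto
  finally have "real (hfun m') = (\<Prod>p\<in>prime_factors m'. real (hfun (p ^ multiplicity p m')))" by simp
  also have "\<dots> = gfun m'" unfolding gfun_def Let_def
    by (intro prod.cong refl hfun_prime_pow) auto
  finally show ?thesis .
qed



lemma card_mod_class:
  assumes e: "(e::nat) > 0" "e dvd d" and c: "c < e"
  shows "card {r. r < d \<and> r mod e = c} = d div e"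
proof -
  have "bij_betw (\<lambda>q. q*e + c) {..<d div e} {r. r < d \<and> r mod e = c}"
  proof (rule bij_betwI')
    fix x y show "(x*e + c = y*e + c) = (x = y)" using e by simp
  next
    fix q assume "q \<in> {..<d div e}"
    then have "q < d div e" by simp
    then have "Suc q \<le> d div e" by simp
    then have "Suc q * e \<le> d div e * e" by (rule mult_le_mono1)
    also have "\<dots> = d" using e by simp
    finally have "q*e + e \<le> d" by simp
    then show "q*e + c \<in> {r. r < d \<and> r mod e = c}" using c by simp
  next
    fix r assume r: "r \<in> {r. r < d \<and> r mod e = c}"
    obtain k where k: "d = e*k" using e(2) by blast
    have "r < k*e" using r k by (simp add: mult.commute)
    then have "r div e < k" by (rule less_mult_imp_div_less)
    then have "r div e < d div e" using k e by simp
    moreover have "r mod e = c" using r by simp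
    then have "r = (r div e)*e + c" using div_mult_mod_eq[of r e] by linarith
    ultimately show "\<exists>q\<in>{..<d div e}. r = q*e + c" by blast
  qed
  then show ?thesis by (simp add: bij_betw_same_card[symmetric])
qed

lemma pair_count:
  assumes d1: "(d1::nat) > 0" and d2: "(d2::nat) > 0"
  shows "card {p \<in> {..<d1} \<times> {..<d2}. int (gcd d1 d2) dvd 2 * (int (fst p) - int (snd p))} = Ffun d1 d2"
proof -
  define g where "g = gcd d1 d2"
  define c where "c = (if even d1 \<and> even d2 then 2 else 1::nat)"
  define e where "e = g div c"
  have gpos: "g > 0" using d1 unfolding g_def by simp
  have cg: "c dvd g" unfolding c_def g_def by auto
  have ec: "e * c = g" unfolding e_def using cg by simp
  have epos: "e > 0" using ec gpos by (metis gr0I mult_is_0)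
  have ed1: "e dvd d1" "e dvd d2" using ec unfolding g_def by (metis dvd_mult_left gcd_dvd1 gcd_dvd2 dvd_trans)+
  have cond: "\<And>z. int g dvd 2 * z \<longleftrightarrow> int e dvd z"
  proof -
    fix z :: int
    show "int g dvd 2 * z \<longleftrightarrow> int e dvd z"
    proof (cases "even d1 \<and> even d2")
      case True
      then have "int g = 2 * int e" using ec unfolding c_def by simp
      then show ?thesis by simp
    next
      case False
      then have "c = 1" unfolding c_def by simp
      then have "e = g" using ec by simp
      have "odd g" using False unfolding g_def by auto
      then have "coprime (int g) 2" by simp
      then show ?thesis using \<open>e = g\<close> by (simp add: coprime_dvd_mult_right_iff)
    qed
  qed
  have "{p \<in> {..<d1} \<times> {..<d2}. int (gcd d1 d2) dvd 2 * (int (fst p) - int (snd p))}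
      = Sigma {..<d1} (\<lambda>r1. {r2. r2 < d2 \<and> r2 mod e = r1 mod e})"
  proof -
    have "\<And>r1 r2. int g dvd 2 * (int r1 - int r2) \<longleftrightarrow> r2 mod e = r1 mod e"
    proof -
      fix r1 r2 :: nat
      have "int g dvd 2 * (int r1 - int r2) \<longleftrightarrow> int e dvd (int r1 - int r2)" by (rule cond)
      also have "\<dots> \<longleftrightarrow> int r1 mod int e = int r2 mod int e" by (simp add: mod_eq_dvd_iff)
      also have "\<dots> \<longleftrightarrow> r2 mod e = r1 mod e" by (simp add: zmod_int[symmetric]) linarith
      finally show "int g dvd 2 * (int r1 - int r2) \<longleftrightarrow> r2 mod e = r1 mod e" .
    qed
    then show ?thesis unfolding g_def by auto
  qed
  then have "card {p \<in> {..<d1} \<times> {..<d2}. int (gcd d1 d2) dvd 2 * (int (fst p) - int (snd p))}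
      = (\<Sum>r1<d1. card {r2. r2 < d2 \<and> r2 mod e = r1 mod e})"
    by (simp add: card_SigmaI)
  also have "\<dots> = (\<Sum>r1<d1. d2 div e)"
    by (intro sum.cong refl card_mod_class epos ed1(2)) (simp add: epos)
  also have "\<dots> = d1 * (d2 div e)" by simp
  also have "\<dots> = Ffun d1 d2"
  proof -
    have "d1 * (d2 div e) = (d1 * d2) div e" using ed1(2) by (simp add: div_mult_swap)
    also have "d1 * d2 = e * (c * lcm d1 d2)"
    proof -
      have "d1 * d2 = g * lcm d1 d2" unfolding g_def by (rule prod_gcd_lcm_nat)
      then show ?thesis using ec by (metis mult.assoc)
    qed
    finally have "d1 * (d2 div e) = c * lcm d1 d2" using epos by simp
    then show ?thesis unfolding Ffun_def c_def by simp
  qed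
  finally show ?thesis .
qed



lemma int_dvd_small_eq: "int d dvd (int a - int b) \<Longrightarrow> a < d \<Longrightarrow> b < d \<Longrightarrow> a = b"
proof -
  assume "int d dvd (int a - int b)" "a < d" "b < d"
  then have "int a mod int d = int b mod int d" unfolding mod_eq_dvd_iff by blast
  then have "a mod d = b mod d" by (simp add: zmod_int[symmetric])
  then show "a = b" using \<open>a < d\<close> \<open>b < d\<close> by simp
qed

lemma Rs_inj:
  assumes n: "0 < n" and d: "d1 dvd 2*n" "d2 dvd 2*n" and eq: "Rs n d1 = Rs n d2"
  shows "d1 = d2"
proof -
  have gen: "\<And>a b. a dvd 2*n \<Longrightarrow> b dvd 2*n \<Longrightarrow> Rs n a = Rs n b \<Longrightarrow> a dvd b"
  proof -
    fix a b assume ab: "a dvd 2*n" "b dvd 2*n" "Rs n a = Rs n b"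
    show "a dvd b"
    proof (cases "b = 2*n")
      case True then show ?thesis using ab by simp
    next
      case False
      have "b \<le> 2*n" using ab(2) n by (simp add: dvd_imp_le)
      then have "b < 2*n" using False by simp
      then have "(b,False) \<in> Rs n b" by (simp add: Rs_def)
      then have "(b,False) \<in> Rs n a" using ab(3) by simp
      then show ?thesis by (simp add: Rs_def)
    qed
  qed
  show ?thesis using gen[OF d eq] gen[OF d(2,1) eq[symmetric]] by (rule dvd_antisym)
qed

lemma Ss_inj:
  assumes n: "0 < n" and d: "d1 dvd n" "d2 dvd n" and r: "r1 < d1" "r2 < d2"
    and eq: "Ss n d1 r1 = Ss n d2 r2"
  shows "d1 = d2 \<and> r1 = r2"
proof -
  have gen: "\<And>a b ra rb. a dvd n \<Longrightarrow> Ss n a ra = Ss n b rb \<Longrightarrow> b dvd a"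
  proof -
    fix a b ra rb assume ab: "a dvd n" "Ss n a ra = Ss n b rb"
    have "a \<le> n" using ab(1) n by (simp add: dvd_imp_le)
    then have "(a,False) \<in> Ss n a ra" using n by (simp add: Ss_memF)
    then have "(a,False) \<in> Ss n b rb" using ab(2) by simp
    then show "b dvd a" by (simp add: Ss_memF)
  qed
  have "d1 = d2" using gen[OF d(2) eq[symmetric]] gen[OF d(1) eq] by (rule dvd_antisym)
  moreover have "d1 \<le> n" using d(1) n by (simp add: dvd_imp_le)
  then have "(r1,True) \<in> Ss n d1 r1" using r n by (simp add: Ss_memT)
  then have "(r1,True) \<in> Ss n d2 r2" using eq by simp
  then have "int d2 dvd (int r1 - int r2)" by (simp add: Ss_memT)
  then have "r1 = r2" using r \<open>d1 = d2\<close> by (intro int_dvd_small_eq[of d2]) auto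
  ultimately show ?thesis by simp
qed

lemma Rs_ne_Ss:
  assumes n: "0 < n" and d: "d' dvd n" and r: "r < d'"
  shows "Rs n d \<noteq> Ss n d' r"
proof -
  have "d' \<le> n" using d n by (simp add: dvd_imp_le)
  then have "(r,True) \<in> Ss n d' r" using r n by (simp add: Ss_memT)
  moreover have "(r,True) \<notin> Rs n d" by (simp add: Rs_def)
  ultimately show ?thesis by blast
qed

lemma SS_comm_iff:
  assumes n: "0 < n" and d: "d1 dvd n" "d2 dvd n" and r: "r1 < d1" "r2 < d2"
  shows "Ss n d1 r1 <#>\<^bsub>Dic n\<^esub> Ss n d2 r2 = Ss n d2 r2 <#>\<^bsub>Dic n\<^esub> Ss n d1 r1
     \<longleftrightarrow> int (gcd d1 d2) dvd 2 * (int r1 - int r2)"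
proof
  assume "Ss n d1 r1 <#>\<^bsub>Dic n\<^esub> Ss n d2 r2 = Ss n d2 r2 <#>\<^bsub>Dic n\<^esub> Ss n d1 r1"
  then show "int (gcd d1 d2) dvd 2 * (int r1 - int r2)" by (rule SS_comm_imp[OF n d r])
next
  assume c: "int (gcd d1 d2) dvd 2 * (int r1 - int r2)"
  have c': "int (gcd d2 d1) dvd 2 * (int r2 - int r1)"
  proof -
    have 1: "int (gcd d1 d2) dvd - (2 * (int r1 - int r2))" using c by (simp only: dvd_minus_iff)
    have 2: "- (2 * (int r1 - int r2)) = 2 * (int r2 - int r1)" by simp
    show ?thesis using 1 unfolding 2 gcd.commute[of d2 d1] .
  qed
  show "Ss n d1 r1 <#>\<^bsub>Dic n\<^esub> Ss n d2 r2 = Ss n d2 r2 <#>\<^bsub>Dic n\<^esub> Ss n d1 r1"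
    using SS_sub[OF n d c] SS_sub[OF n d(2,1) c'] by (rule equalityI)
qed

theorem theorem2p1:
  fixes n m m' :: nat
  assumes "n = 2^m * m'" and "odd m'"
  shows "sd (Dic n) =
    (real (m+2)^2 * real (tau m')^2 + 2 * real (m+2) * real (tau m') * real (sigma n)
      + ((real m - 1) * 2^(m+3) + 9) * gfun m')
    / (real (m+2) * real (tau m') + real (sigma n))^2"
proof -
  have m'pos: "m' > 0" using assms(2) by (cases m') auto
  have n: "0 < n" using assms(1) m'pos by simp
  define A1 where "A1 = D (2*n)"
  define A2 where "A2 = Sigma (D n) (\<lambda>d. {..<d})"
  define SS where "SS = (\<lambda>p. Ss n (fst p) (snd p))"
  define L1 where "L1 = Rs n ` A1"
  define L2 where "L2 = SS ` A2"
  have finA1: "finite A1" unfolding A1_def using n by simp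
  have finA2: "finite A2" unfolding A2_def using n by (intro finite_SigmaI) simp_all
  have A2mem: "\<And>p. p \<in> A2 \<longleftrightarrow> fst p dvd n \<and> snd p < fst p" unfolding A2_def by auto
  have L: "subgroups (Dic n) = L1 \<union> L2"
  proof
    show "subgroups (Dic n) \<subseteq> L1 \<union> L2"
    proof
      fix H assume "H \<in> subgroups (Dic n)"
      then have "subgroup H (Dic n)" by (simp add: subgroups_def)
      from subgroup_classify[OF n this] show "H \<in> L1 \<union> L2"
      proof
        assume "\<exists>d. d dvd 2*n \<and> H = Rs n d"
        then show ?thesis unfolding L1_def A1_def by auto
      next
        assume "\<exists>d r. d dvd n \<and> r < d \<and> H = Ss n d r"
        then obtain d r where "d dvd n" "r < d" "H = Ss n d r" by blast
        then have "H = SS (d,r)" "(d,r) \<in> A2" unfolding SS_def A2_def by auto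
        then show ?thesis unfolding L2_def by blast
      qed
    qed
    show "L1 \<union> L2 \<subseteq> subgroups (Dic n)"
      unfolding L1_def L2_def A1_def SS_def subgroups_def
      using Rs_sub[OF n] Ss_sub[OF n] A2mem by auto
  qed
  have sub_carrier: "\<And>K. K \<in> L1 \<union> L2 \<Longrightarrow> K \<subseteq> carrier (Dic n)"
    using L by (auto simp: subgroups_def dest: subgroup.subset)
  have inj1: "inj_on (Rs n) A1" unfolding A1_def using Rs_inj[OF n] by (auto intro: inj_onI)
  have inj2: "inj_on SS A2"
  proof (rule inj_onI)
    fix x y assume "x \<in> A2" "y \<in> A2" "SS x = SS y"
    then show "x = y" unfolding SS_def using Ss_inj[OF n] A2mem by (metis prod.collapse)
  qed
  have disj: "L1 \<inter> L2 = {}" unfolding L1_def L2_def SS_def using Rs_ne_Ss[OF n] A2mem by auto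
  have finL1: "finite L1" and finL2: "finite L2" unfolding L1_def L2_def using finA1 finA2 by simp_all
  have cardL1: "card L1 = tau (2*n)" unfolding L1_def tau_def A1_def using inj1 unfolding A1_def by (simp add: card_image)
  have cardL2: "card L2 = sigma n"
  proof -
    have "card L2 = card A2" unfolding L2_def using inj2 by (simp add: card_image)
    also have "\<dots> = (\<Sum>d\<in>D n. card {..<d})" unfolding A2_def using n by (simp add: card_SigmaI)
    also have "\<dots> = sigma n" unfolding sigma_def by simp
    finally show ?thesis .
  qed
  have cardL: "card (subgroups (Dic n)) = tau (2*n) + sigma n"
    unfolding L using card_Un_disjoint[OF finL1 finL2 disj] cardL1 cardL2 by simp
  define P3 where "P3 = {(H,K). H \<in> L2 \<and> K \<in> L2 \<and> H <#>\<^bsub>Dic n\<^esub> K = K <#>\<^bsub>Dic n\<^esub> H}"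
  have comm1: "\<And>H K. H \<in> L1 \<Longrightarrow> K \<in> L1 \<union> L2 \<Longrightarrow> H <#>\<^bsub>Dic n\<^esub> K = K <#>\<^bsub>Dic n\<^esub> H"
  proof -
    fix H K assume "H \<in> L1" "K \<in> L1 \<union> L2"
    then obtain d where "d dvd 2*n" "H = Rs n d" unfolding L1_def A1_def by auto
    then show "H <#>\<^bsub>Dic n\<^esub> K = K <#>\<^bsub>Dic n\<^esub> H" using Rs_comm[OF n] sub_carrier[OF \<open>K \<in> L1 \<union> L2\<close>] by simp
  qed
  have Peq: "{(H, K). H \<in> subgroups (Dic n) \<and> K \<in> subgroups (Dic n) \<and> H <#>\<^bsub>Dic n\<^esub> K = K <#>\<^bsub>Dic n\<^esub> H}
     = L1 \<times> (L1 \<union> L2) \<union> (L2 \<times> L1 \<union> P3)"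
    unfolding L P3_def using comm1 by auto
  have finP3: "finite P3" unfolding P3_def using finL2 by (rule rev_finite_subset[OF finite_cartesian_product[OF finL2]]) auto
  have cardP: "card {(H, K). H \<in> subgroups (Dic n) \<and> K \<in> subgroups (Dic n) \<and> H <#>\<^bsub>Dic n\<^esub> K = K <#>\<^bsub>Dic n\<^esub> H}
     = card L1 * (card L1 + card L2) + (card L2 * card L1 + card P3)"
  proof -
    have d1: "L1 \<times> (L1 \<union> L2) \<inter> (L2 \<times> L1 \<union> P3) = {}" using disj unfolding P3_def by auto
    have d2: "L2 \<times> L1 \<inter> P3 = {}" using disj unfolding P3_def by auto
    have "card (L1 \<times> (L1 \<union> L2) \<union> (L2 \<times> L1 \<union> P3)) = card (L1 \<times> (L1 \<union> L2)) + card (L2 \<times> L1 \<union> P3)"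
      by (rule card_Un_disjoint) (use finL1 finL2 finP3 d1 in auto)
    also have "card (L2 \<times> L1 \<union> P3) = card (L2 \<times> L1) + card P3"
      by (rule card_Un_disjoint) (use finL1 finL2 finP3 d2 in auto)
    finally show ?thesis unfolding Peq
      using card_Un_disjoint[OF finL1 finL2 disj] by (simp add: card_cartesian_product)
  qed
  define Q where "Q = {(x,y). x \<in> A2 \<and> y \<in> A2 \<and> int (gcd (fst x) (fst y)) dvd 2 * (int (snd x) - int (snd y))}"
  have cardP3: "card P3 = card Q"
  proof -
    have "P3 = (\<lambda>(x,y). (SS x, SS y)) ` Q"
    proof
      show "P3 \<subseteq> (\<lambda>(x,y). (SS x, SS y)) ` Q"
      proof
        fix z assume "z \<in> P3"
        then obtain x y where xy: "z = (SS x, SS y)" "x \<in> A2" "y \<in> A2" "SS x <#>\<^bsub>Dic n\<^esub> SS y = SS y <#>\<^bsub>Dic n\<^esub> SS x"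
          unfolding P3_def L2_def by auto
        then have "int (gcd (fst x) (fst y)) dvd 2 * (int (snd x) - int (snd y))"
          unfolding SS_def using SS_comm_iff[OF n] A2mem by blast
        then show "z \<in> (\<lambda>(x,y). (SS x, SS y)) ` Q" using xy unfolding Q_def by auto
      qed
      show "(\<lambda>(x,y). (SS x, SS y)) ` Q \<subseteq> P3"
      proof
        fix z assume "z \<in> (\<lambda>(x,y). (SS x, SS y)) ` Q"
        then obtain x y where xy: "z = (SS x, SS y)" "x \<in> A2" "y \<in> A2" "int (gcd (fst x) (fst y)) dvd 2 * (int (snd x) - int (snd y))"
          unfolding Q_def by auto
        then have "SS x <#>\<^bsub>Dic n\<^esub> SS y = SS y <#>\<^bsub>Dic n\<^esub> SS x"
          unfolding SS_def using SS_comm_iff[OF n] A2mem by blast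
        then show "z \<in> P3" using xy unfolding P3_def L2_def by auto
      qed
    qed
    moreover have "inj_on (\<lambda>(x,y). (SS x, SS y)) Q"
      using inj2 unfolding Q_def by (auto simp: inj_on_def)
    ultimately show ?thesis by (simp add: card_image)
  qed
  have cardQ: "card Q = Wfun n"
  proof -
    define Q' where "Q' = Sigma (D n \<times> D n) (\<lambda>dd. {p \<in> {..<fst dd} \<times> {..<snd dd}. int (gcd (fst dd) (snd dd)) dvd 2 * (int (fst p) - int (snd p))})"
    define f where "f = (\<lambda>(dd::nat\<times>nat, rr::nat\<times>nat). ((fst dd, fst rr), (snd dd, snd rr)))"
    have "Q = f ` Q'"
    proof
      show "Q \<subseteq> f ` Q'"
      proof
        fix z assume "z \<in> Q"
        then obtain d1 r1 d2 r2 where z: "z = ((d1,r1),(d2,r2))" "d1 dvd n" "r1 < d1" "d2 dvd n" "r2 < d2"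
          "int (gcd d1 d2) dvd 2 * (int r1 - int r2)"
          unfolding Q_def using A2mem by force
        then have "((d1,d2),(r1,r2)) \<in> Q'" unfolding Q'_def by auto
        moreover have "z = f ((d1,d2),(r1,r2))" unfolding f_def z by simp
        ultimately show "z \<in> f ` Q'" by blast
      qed
      show "f ` Q' \<subseteq> Q" unfolding f_def Q'_def Q_def A2_def by auto
    qed
    moreover have "inj_on f Q'" unfolding f_def by (auto simp: inj_on_def)
    ultimately have "card Q = card Q'" by (simp add: card_image)
    also have "\<dots> = (\<Sum>dd\<in>D n \<times> D n. Ffun (fst dd) (snd dd))"
      unfolding Q'_def using n
    proof (subst card_SigmaI)
      show "finite (D n \<times> D n)" using n by simp
      show "\<forall>a\<in>D n \<times> D n. finite {p \<in> {..<fst a} \<times> {..<snd a}. int (gcd (fst a) (snd a)) dvd 2 * (int (fst p) - int (snd p))}"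
        by auto
      show "(\<Sum>a\<in>D n \<times> D n. card {p \<in> {..<fst a} \<times> {..<snd a}. int (gcd (fst a) (snd a)) dvd 2 * (int (fst p) - int (snd p))})
          = (\<Sum>dd\<in>D n \<times> D n. Ffun (fst dd) (snd dd))"
      proof (intro sum.cong refl pair_count)
        fix dd assume "dd \<in> D n \<times> D n"
        then show "fst dd > 0" "snd dd > 0" using n by (auto intro!: Nat.gr0I)
      qed
    qed
    also have "\<dots> = Wfun n" unfolding Wfun_def sum_prod_split by simp
    finally show ?thesis .
  qed
  have cop1: "coprime (2^(Suc m)) m'" "coprime (2^m) m'" using assms(2) by simp_all
  have tau2n: "tau (2*n) = (m+2) * tau m'"
  proof -
    have "2*n = 2^(Suc m) * m'" using assms(1) by simp
    then have "tau (2*n) = tau (2^(Suc m)) * tau m'" using tau_mult[OF cop1(1)] m'pos by (simp add: mult.assoc)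
    then show ?thesis using tau_prime_pow[OF two_is_prime_nat, of "Suc m"] by simp
  qed
  have Wn: "real (Wfun n) = ((real m - 1) * 2^(m+3) + 9) * gfun m'"
  proof -
    have "Wfun n = Wfun (2^m) * hfun m'" using Wfun_mult[OF cop1(2) _ m'pos assms(2)] assms(1) by simp
    then show ?thesis using Wfun_two_pow[of m] hfun_gfun[OF m'pos] by simp
  qed
  have "sd (Dic n) = real (card L1 * (card L1 + card L2) + (card L2 * card L1 + card Q)) / real (tau (2*n) + sigma n)^2"
    unfolding sd_def cardP cardL cardP3 ..
  also have "\<dots> = (real (m+2)^2 * real (tau m')^2 + 2 * real (m+2) * real (tau m') * real (sigma n)
      + ((real m - 1) * 2^(m+3) + 9) * gfun m')
    / (real (m+2) * real (tau m') + real (sigma n))^2"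
    unfolding cardL1 cardL2 cardQ tau2n using Wn by (simp add: algebra_simps power2_eq_square)
  finally show ?thesis .
qed

end
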